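(* Let $M$ be a von Neumann algebra, $\varphi\colon M\to M$ a normal UCP map, $M^\varphi=\{x\in M:\varphi(x)=x\}$, and let $\psi\colon M\to M$ be a UCP idempotent with range $M^\varphi$ such that $\varphi\circ\psi=\psi\circ\varphi=\psi$ and $\psi(x)=x$ for all $x\in M^\varphi$. Equip $M^\varphi$ with the Choi–Effros product $x\circ y:=\psi(xy)$, making it a $C^*$-algebra $H^\infty(M,\varphi)$, and let $\mathrm{mult}(\psi)=\{y\in M:\psi(y^*y)=\psi(y)^*\circ\psi(y)\text{ and }\psi(yy^* )=\psi(y)\circ\psi(y)^*\}$ be the multiplicative domain of $\psi$ viewed as a UCP map $M\to H^\infty(M,\varphi)$. Then $M^\varphi\subseteq\mathrm{mult}(\psi)$ and $\varphi(\mathrm{mult}(\psi))\subseteq\mathrm{mult}(\psi)$.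
   Context: Such a $\psi$ exists, e.g. as a BW-limit point of the Cesàro averages $\frac{1}{m+1}\sum_{k=0}^m\varphi^k$. The identity map $M^\varphi\to H^\infty(M,\varphi)$ is a complete order isomorphism; $H^\infty(M,\varphi)$ is called the non-commutative Poisson boundary of $\varphi$. *)

theory Defs
  imports Complex_Main
begin

class chilbert = ab_group_add +
  fixes scaleC :: "complex \<Rightarrow> 'a \<Rightarrow> 'a"
    and cinner :: "'a \<Rightarrow> 'a \<Rightarrow> complex"
  assumes scaleC_add_right: "scaleC c (x + y) = scaleC c x + scaleC c y"
    and scaleC_add_left: "scaleC (c + d) x = scaleC c x + scaleC d x"
    and scaleC_scaleC: "scaleC c (scaleC d x) = scaleC (c * d) x"
    and scaleC_one: "scaleC 1 x = x"
    and cinner_commute: "cinner x y = cnj (cinner y x)"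
    and cinner_add_right: "cinner x (y + z) = cinner x y + cinner x z"
    and cinner_scaleC_right: "cinner x (scaleC c y) = c * cinner x y"
    and cinner_ge_zero: "0 \<le> Re (cinner x x)"
    and cinner_eq_zero: "cinner x x = 0 \<Longrightarrow> x = 0"
    and complete:
      "(\<forall>e>0. \<exists>N. \<forall>m\<ge>N. \<forall>n\<ge>N. sqrt (Re (cinner (X m - X n) (X m - X n))) < e)
        \<Longrightarrow> (\<exists>L. (\<lambda>n. sqrt (Re (cinner (X n - L) (X n - L)))) \<longlonglongrightarrow> 0)"

definition cnorm :: "'a::chilbert \<Rightarrow> real" where
  "cnorm x = sqrt (Re (cinner x x))"

definition bounded_op :: "('a::chilbert \<Rightarrow> 'a) \<Rightarrow> bool" where
  "bounded_op T \<longleftrightarrow> (\<forall>x y. T (x + y) = T x + T y) \<and> (\<forall>c x. T (scaleC c x) = scaleC c (T x))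
     \<and> (\<exists>K. \<forall>x. cnorm (T x) \<le> K * cnorm x)"

definition adj :: "('a::chilbert \<Rightarrow> 'a) \<Rightarrow> ('a \<Rightarrow> 'a)" where
  "adj T = (THE S. \<forall>x y. cinner (T x) y = cinner x (S y))"

definition op_add :: "('a::chilbert \<Rightarrow> 'a) \<Rightarrow> ('a \<Rightarrow> 'a) \<Rightarrow> ('a \<Rightarrow> 'a)" where
  "op_add S T = (\<lambda>x. S x + T x)"

definition op_diff :: "('a::chilbert \<Rightarrow> 'a) \<Rightarrow> ('a \<Rightarrow> 'a) \<Rightarrow> ('a \<Rightarrow> 'a)" where
  "op_diff S T = (\<lambda>x. S x - T x)"

definition op_scale :: "complex \<Rightarrow> ('a::chilbert \<Rightarrow> 'a) \<Rightarrow> ('a \<Rightarrow> 'a)" where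
  "op_scale c T = (\<lambda>x. scaleC c (T x))"

definition op_pos :: "('a::chilbert \<Rightarrow> 'a) \<Rightarrow> bool" where
  "op_pos T \<longleftrightarrow> (\<forall>h. Im (cinner h (T h)) = 0 \<and> 0 \<le> Re (cinner h (T h)))"

definition op_le :: "('a::chilbert \<Rightarrow> 'a) \<Rightarrow> ('a \<Rightarrow> 'a) \<Rightarrow> bool" where
  "op_le S T \<longleftrightarrow> op_pos (op_diff T S)"

text \<open>Positivity of an n x n operator matrix, i.e. of an operator on \<open>H^n\<close>.\<close>
definition mat_pos :: "nat \<Rightarrow> (nat \<Rightarrow> nat \<Rightarrow> ('a::chilbert \<Rightarrow> 'a)) \<Rightarrow> bool" where
  "mat_pos n X \<longleftrightarrow> (\<forall>h :: nat \<Rightarrow> 'a.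
      Im (\<Sum>i<n. \<Sum>j<n. cinner (h i) (X i j (h j))) = 0 \<and>
      0 \<le> Re (\<Sum>i<n. \<Sum>j<n. cinner (h i) (X i j (h j))))"

definition commutant :: "('a::chilbert \<Rightarrow> 'a) set \<Rightarrow> ('a \<Rightarrow> 'a) set" where
  "commutant S = {T. bounded_op T \<and> (\<forall>s\<in>S. T \<circ> s = s \<circ> T)}"

definition von_neumann_algebra :: "('a::chilbert \<Rightarrow> 'a) set \<Rightarrow> bool" where
  "von_neumann_algebra M \<longleftrightarrow>
     M \<subseteq> {T. bounded_op T} \<and> id \<in> M \<and>
     (\<forall>x\<in>M. \<forall>y\<in>M. op_add x y \<in> M \<and> x \<circ> y \<in> M) \<and>
     (\<forall>c. \<forall>x\<in>M. op_scale c x \<in> M) \<and>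
     (\<forall>x\<in>M. adj x \<in> M) \<and>
     M = commutant (commutant M)"

definition linear_on :: "('a::chilbert \<Rightarrow> 'a) set \<Rightarrow> (('a \<Rightarrow> 'a) \<Rightarrow> ('a \<Rightarrow> 'a)) \<Rightarrow> bool" where
  "linear_on M f \<longleftrightarrow> (\<forall>x\<in>M. \<forall>y\<in>M. f (op_add x y) = op_add (f x) (f y)) \<and>
                     (\<forall>c. \<forall>x\<in>M. f (op_scale c x) = op_scale c (f x))"

definition completely_positive_on :: "('a::chilbert \<Rightarrow> 'a) set \<Rightarrow> (('a \<Rightarrow> 'a) \<Rightarrow> ('a \<Rightarrow> 'a)) \<Rightarrow> bool" where
  "completely_positive_on M f \<longleftrightarrow>
     (\<forall>n X. (\<forall>i<n. \<forall>j<n. X i j \<in> M) \<and> mat_pos n X \<longrightarrow> mat_pos n (\<lambda>i j. f (X i j)))"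

definition ucp_on :: "('a::chilbert \<Rightarrow> 'a) set \<Rightarrow> (('a \<Rightarrow> 'a) \<Rightarrow> ('a \<Rightarrow> 'a)) \<Rightarrow> bool" where
  "ucp_on M f \<longleftrightarrow> f ` M \<subseteq> M \<and> linear_on M f \<and> f id = id \<and> completely_positive_on M f"

definition is_lub_op :: "('a::chilbert \<Rightarrow> 'a) set \<Rightarrow> ('a \<Rightarrow> 'a) \<Rightarrow> bool" where
  "is_lub_op D x \<longleftrightarrow> (\<forall>a\<in>D. op_le a x) \<and>
     (\<forall>y. bounded_op y \<and> (\<forall>a\<in>D. op_le a y) \<longrightarrow> op_le x y)"

text \<open>Normal positive map: preserves suprema of bounded increasing nets
  (upward directed families) of self-adjoint elements.\<close>
definition normal_on :: "('a::chilbert \<Rightarrow> 'a) set \<Rightarrow> (('a \<Rightarrow> 'a) \<Rightarrow> ('a \<Rightarrow> 'a)) \<Rightarrow> bool" where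
  "normal_on M f \<longleftrightarrow>
     (\<forall>D x. D \<noteq> {} \<and> D \<subseteq> M \<and> (\<forall>a\<in>D. adj a = a) \<and>
        (\<forall>a\<in>D. \<forall>b\<in>D. \<exists>c\<in>D. op_le a c \<and> op_le b c) \<and> is_lub_op D x
        \<longrightarrow> is_lub_op (f ` D) (f x))"

definition fixed_points :: "('a::chilbert \<Rightarrow> 'a) set \<Rightarrow> (('a \<Rightarrow> 'a) \<Rightarrow> ('a \<Rightarrow> 'a)) \<Rightarrow> ('a \<Rightarrow> 'a) set" where
  "fixed_points M f = {x\<in>M. f x = x}"

text \<open>Multiplicative domain of \<open>\<psi>\<close> viewed as a UCP map into \<open>H^\<infinity>(M,\<phi>)\<close>, whose
  product is the Choi--Effros product \<open>x \<circ> y = \<psi>(xy)\<close> and whose involution is the adjoint.\<close>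
definition ce_prod :: "(('a::chilbert \<Rightarrow> 'a) \<Rightarrow> ('a \<Rightarrow> 'a)) \<Rightarrow> ('a \<Rightarrow> 'a) \<Rightarrow> ('a \<Rightarrow> 'a) \<Rightarrow> ('a \<Rightarrow> 'a)" where
  "ce_prod \<psi> x y = \<psi> (x \<circ> y)"

definition mult_dom :: "('a::chilbert \<Rightarrow> 'a) set \<Rightarrow> (('a \<Rightarrow> 'a) \<Rightarrow> ('a \<Rightarrow> 'a)) \<Rightarrow> ('a \<Rightarrow> 'a) set" where
  "mult_dom M \<psi> = {y\<in>M. \<psi> (adj y \<circ> y) = ce_prod \<psi> (adj (\<psi> y)) (\<psi> y) \<and>
                         \<psi> (y \<circ> adj y) = ce_prod \<psi> (\<psi> y) (adj (\<psi> y))}"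

end

theory Submission
  imports Defs
begin


lemma scaleC_zero_left[simp]: "scaleC 0 (x::'a::chilbert) = 0"
proof -
  have "scaleC 0 x = scaleC 0 x + scaleC 0 x" by (metis add_0 scaleC_add_left)
  then show ?thesis by simp
qed

lemma scaleC_minus_one: "scaleC (-1) (x::'a::chilbert) = - x"
proof -
  have "scaleC 1 x + scaleC (-1) x = 0" by (metis scaleC_add_left scaleC_zero_left add.right_inverse)
  then show ?thesis by (simp add: scaleC_one add_eq_0_iff)
qed

lemma scaleC_zero_right[simp]: "scaleC c (0::'a::chilbert) = 0"
proof -
  have "scaleC c (0::'a) = scaleC c 0 + scaleC c 0" by (metis add_0 scaleC_add_right)
  then show ?thesis by simp
qed

lemma scaleC_minus_right: "scaleC c (- (x::'a::chilbert)) = - scaleC c x"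
  by (metis add.right_inverse add_eq_0_iff scaleC_add_right scaleC_zero_right)

lemma scaleC_diff_right: "scaleC c ((x::'a::chilbert) - y) = scaleC c x - scaleC c y"
  by (metis diff_conv_add_uminus scaleC_add_right scaleC_minus_right)

lemma cinner_zero_right[simp]: "cinner (x::'a::chilbert) 0 = 0"
  by (metis add_0 add_cancel_right_right cinner_add_right)

lemma cinner_zero_left[simp]: "cinner 0 (x::'a::chilbert) = 0"
  by (metis cinner_commute cinner_zero_right complex_cnj_zero)

lemma cinner_minus_right: "cinner (x::'a::chilbert) (- y) = - cinner x y"
  by (metis add.right_inverse add_eq_0_iff cinner_add_right cinner_zero_right)

lemma cinner_diff_right: "cinner (x::'a::chilbert) (y - z) = cinner x y - cinner x z"
  by (metis cinner_add_right cinner_minus_right diff_conv_add_uminus)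

lemma cinner_add_left: "cinner ((x::'a::chilbert) + y) z = cinner x z + cinner y z"
  by (metis cinner_add_right cinner_commute complex_cnj_add)

lemma cinner_scaleC_left: "cinner (scaleC c (x::'a::chilbert)) y = cnj c * cinner x y"
  by (metis cinner_commute cinner_scaleC_right complex_cnj_cnj complex_cnj_mult)

lemma cinner_minus_left: "cinner (- (x::'a::chilbert)) y = - cinner x y"
  by (metis cinner_commute cinner_minus_right complex_cnj_minus)

lemma cinner_diff_left: "cinner ((x::'a::chilbert) - y) z = cinner x z - cinner y z"
  by (metis cinner_add_left cinner_minus_left diff_conv_add_uminus)

lemma Im_cinner_self[simp]: "Im (cinner (x::'a::chilbert) x) = 0"
  by (metis cinner_commute complex_cnj_cancel_iff complex_is_Real_iff Reals_cnj_iff)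

lemma Re_cinner_swap: "Re (cinner (x::'a::chilbert) y) = Re (cinner y x)"
  by (subst cinner_commute) simp

definition nn :: "'a::chilbert \<Rightarrow> real" where "nn x = Re (cinner x x)"

lemma nn_ge0: "0 \<le> nn x" by (simp add: nn_def cinner_ge_zero)

lemma cinner_self_nn: "cinner x x = complex_of_real (nn x)"
  by (simp add: nn_def complex_eq_iff)

lemma disc_lemma:
  fixes A B r :: real
  assumes "\<forall>t. 0 \<le> A + 2 * t * r + t^2 * B" "0 \<le> A" "0 \<le> B"
  shows "r^2 \<le> A * B"
proof (cases "B = 0")
  case True
  show ?thesis
  proof (rule ccontr)
    assume "\<not> ?thesis"
    then have "r \<noteq> 0" using True by simp
    have "0 \<le> A + 2 * (-(A+1)/(2*r)) * r + (-(A+1)/(2*r))^2 * B" using assms(1) by blast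
    also have "\<dots> = -1" using \<open>r \<noteq> 0\<close> True by (simp add: field_simps)
    finally show False by simp
  qed
next
  case False
  then have Bp: "B > 0" using assms by simp
  have "0 \<le> A + 2 * (-r/B) * r + (-r/B)^2 * B" using assms(1) by blast
  also have "\<dots> = A - r^2 / B" using Bp by (simp add: field_simps power2_eq_square)
  finally have "r^2 / B \<le> A" by simp
  then show ?thesis using Bp by (simp add: field_simps mult.commute)
qed

lemma nn_expand:
  "nn (a + scaleC (complex_of_real t) b) = nn a + 2 * t * Re (cinner a b) + t^2 * nn b"
proof -
  have "cinner (a + scaleC (complex_of_real t) b) (a + scaleC (complex_of_real t) b)
     = cinner a a + complex_of_real t * cinner a b + complex_of_real t * cinner b a
       + complex_of_real t * complex_of_real t * cinner b b"
    by (simp add: cinner_add_left cinner_add_right cinner_scaleC_left cinner_scaleC_right algebra_simps)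
  then show ?thesis
    by (simp add: nn_def Re_cinner_swap[of b a] power2_eq_square algebra_simps)
qed

lemma cauchy_schwarz_Re: "(Re (cinner a b))^2 \<le> nn a * nn b"
proof (rule disc_lemma)
  show "\<forall>t. 0 \<le> nn a + 2 * t * Re (cinner a b) + t^2 * nn b"
    using nn_expand nn_ge0 by metis
qed (auto simp: nn_ge0)

lemma abs_le_sqrt: "(r::real)^2 \<le> A * B \<Longrightarrow> 0 \<le> A \<Longrightarrow> 0 \<le> B \<Longrightarrow> \<bar>r\<bar> \<le> sqrt A * sqrt B"
  by (metis real_sqrt_abs real_sqrt_le_mono real_sqrt_mult)

lemma cinner_ext: "(\<And>x. cinner x a = cinner x b) \<Longrightarrow> (a::'a::chilbert) = b"
proof -
  assume h: "\<And>x. cinner x a = cinner x b"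
  have "cinner (a - b) (a - b) = 0" using h by (simp add: cinner_diff_right)
  then show ?thesis using cinner_eq_zero[of "a-b"] by simp
qed

lemma cnorm_sq: "(cnorm x)^2 = nn x"
  unfolding cnorm_def nn_def by (rule real_sqrt_pow2[OF cinner_ge_zero])

lemma bounded_nn:
  assumes "bounded_op T"
  obtains K where "0 \<le> K" "\<And>x. nn (T x) \<le> K * nn x"
proof -
  obtain K where K: "\<And>x. cnorm (T x) \<le> K * cnorm x" using assms unfolding bounded_op_def by blast
  have "nn (T x) \<le> (max K 0)^2 * nn x" for x
  proof -
    have c0: "0 \<le> cnorm (T x)" "0 \<le> cnorm x" by (simp_all add: cnorm_def cinner_ge_zero)
    have "cnorm (T x) \<le> max K 0 * cnorm x"
      using K[of x] c0 by (smt (verit) mult_right_mono)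
    then have "(cnorm (T x))^2 \<le> (max K 0 * cnorm x)^2" using c0 by (simp add: power_mono)
    then show ?thesis by (simp add: cnorm_sq power_mult_distrib)
  qed
  then show ?thesis using that[of "(max K 0)^2"] by simp
qed

lemma bounded_add: "bounded_op T \<Longrightarrow> T (x + y) = T x + T y" by (simp add: bounded_op_def)
lemma bounded_scale: "bounded_op T \<Longrightarrow> T (scaleC c x) = scaleC c (T x)" by (simp add: bounded_op_def)

lemma riesz:
  fixes T :: "'a::chilbert \<Rightarrow> 'a"
  assumes bT: "bounded_op T"
  shows "\<exists>w. \<forall>u. cinner v (T u) = cinner w u"
proof -
  obtain K where K0: "0 \<le> K" and K: "\<And>x. nn (T x) \<le> K * nn x" using bounded_nn[OF bT] by blast
  define g where "g u = cinner v (T u)" for u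
  define C where "C = nn v * K"
  have C0: "0 \<le> C" using K0 nn_ge0[of v] by (simp add: C_def)
  have g_add: "g (a + b) = g a + g b" for a b using bT by (simp add: g_def bounded_add cinner_add_right)
  have g_scale: "g (scaleC c a) = c * g a" for c a using bT by (simp add: g_def bounded_scale cinner_scaleC_right)
  have g_bound: "(Re (g u))^2 \<le> C * nn u" for u
  proof -
    have "(Re (g u))^2 \<le> nn v * nn (T u)" unfolding g_def by (rule cauchy_schwarz_Re)
    also have "\<dots> \<le> nn v * (K * nn u)" using K by (simp add: mult_left_mono nn_ge0)
    finally show ?thesis by (simp add: C_def mult.assoc)
  qed
  have g_abs: "\<bar>Re (g u)\<bar> \<le> sqrt C * sqrt (nn u)" for u
    using abs_le_sqrt[OF g_bound C0 nn_ge0] .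
  define F where "F u = nn u - 2 * Re (g u)" for u
  have F_lb: "- C \<le> F u" for u
  proof -
    have "2 * \<bar>Re (g u)\<bar> \<le> nn u + C"
    proof -
      have "2 * (sqrt C * sqrt (nn u)) \<le> C + nn u"
        using sum_squares_bound[of "sqrt C" "sqrt (nn u)"] C0 nn_ge0[of u]
        by (simp add: power2_eq_square mult_ac)
      then show ?thesis using g_abs[of u] by linarith
    qed
    then show ?thesis by (simp add: F_def)
  qed
  define m where "m = Inf (range F)"
  have bdd: "bdd_below (range F)" using F_lb by (metis bdd_belowI2)
  have m_le: "m \<le> F u" for u unfolding m_def using bdd by (simp add: cInf_lower)
  have ex: "\<exists>u. F u < m + 1 / (real n + 1)" for n
  proof -
    have "m < m + 1 / (real n + 1)" by simp
    then show ?thesis unfolding m_def using cInf_lessD[of "range F"] by auto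
  qed
  then obtain u where u: "\<And>n. F (u n) < m + 1 / (real n + 1)" by metis
  have half: "F (scaleC (complex_of_real (1/2)) (a + b)) = nn (a + b) / 4 - Re (g a) - Re (g b)" for a b
  proof -
    have "nn (scaleC (complex_of_real (1/2)) (a + b)) = nn (a + b) / 4"
      using nn_expand[of 0 "1/2" "a+b"] by (simp add: power2_eq_square nn_def)
    moreover have "Re (g (scaleC (complex_of_real (1/2)) (a + b))) = (Re (g a) + Re (g b)) / 2"
      by (simp add: g_scale g_add)
    ultimately show ?thesis unfolding F_def by (simp add: field_simps)
  qed
  have para: "nn (a + b) + nn (a - b) = 2 * nn a + 2 * nn b" for a b :: 'a
    using nn_expand[of a 1 b] nn_expand[of a "-1" b]
    by (simp add: scaleC_one scaleC_minus_one)
  have key: "nn (a - b) \<le> 2 * (F a - m) + 2 * (F b - m)" for a b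
  proof -
    have "m \<le> F (scaleC (complex_of_real (1/2)) (a + b))" by (rule m_le)
    note h = this half[of a b] para[of a b]
    have s1: "nn (a + b) \<ge> 4 * m + 4 * Re (g a) + 4 * Re (g b)" using h(1) h(2) by linarith
    have s2: "nn (a - b) = 2 * nn a + 2 * nn b - nn (a + b)" using h(3) by linarith
    show ?thesis using s1 s2 unfolding F_def by (simp add: algebra_simps)
  qed
  have cauchy: "\<forall>e>0. \<exists>N. \<forall>p\<ge>N. \<forall>q\<ge>N. sqrt (Re (cinner (u p - u q) (u p - u q))) < e"
  proof (intro allI impI)
    fix e :: real assume e: "e > 0"
    obtain N :: nat where N0: "4 / e^2 < real N" using reals_Archimedean2 by blast
    then have N: "4 / e^2 < real N + 1" by linarith
    have "e^2 > 0" using e by simp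
    then have N2: "4 / (real N + 1) < e^2" using N by (simp add: field_simps)
    show "\<exists>N. \<forall>p\<ge>N. \<forall>q\<ge>N. sqrt (Re (cinner (u p - u q) (u p - u q))) < e"
    proof (intro exI allI impI)
      fix p q assume p: "N \<le> p" and q: "N \<le> q"
      have d: "1 / (real k + 1) \<le> 1 / (real N + 1)" if "N \<le> k" for k
        using that by (simp add: frac_le)
      have "nn (u p - u q) \<le> 2 * (F (u p) - m) + 2 * (F (u q) - m)" by (rule key)
      also have "\<dots> < 2 * (1 / (real N + 1)) + 2 * (1 / (real N + 1))"
        using u[of p] u[of q] d[OF p] d[OF q] by (smt (verit))
      also have "\<dots> = 4 / (real N + 1)" by simp
      also have "\<dots> < e^2" by (rule N2)
      finally have "nn (u p - u q) < e^2" .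
      then have "sqrt (nn (u p - u q)) < sqrt (e^2)" by (rule real_sqrt_less_mono)
      then have "sqrt (nn (u p - u q)) < e" using e by simp
      then show "sqrt (Re (cinner (u p - u q) (u p - u q))) < e" using e by (simp add: nn_def)
    qed
  qed
  obtain L where L: "(\<lambda>n. sqrt (Re (cinner (u n - L) (u n - L)))) \<longlonglongrightarrow> 0"
    using complete[OF cauchy] by blast
  define s where "s n = sqrt (nn (u n - L))" for n
  have "s = (\<lambda>n. sqrt (Re (cinner (u n - L) (u n - L))))" by (rule ext) (simp add: s_def nn_def)
  then have s: "s \<longlonglongrightarrow> 0" using L by simp
  define D where "D = 2 * sqrt (nn L) + 2 * sqrt C"
  have FL_le: "F L \<le> m + 1 / (real n + 1) + D * s n" for n
  proof -
    define e where "e = u n - L"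
    have ue: "u n = L + e" by (simp add: e_def)
    have "F (u n) = nn L + 2 * Re (cinner L e) + nn e - 2 * Re (g L) - 2 * Re (g e)"
      using nn_expand[of L 1 e] by (simp add: F_def ue g_add scaleC_one)
    then have "F L = F (u n) - 2 * Re (cinner L e) - nn e + 2 * Re (g e)" by (simp add: F_def)
    moreover have "\<bar>Re (cinner L e)\<bar> \<le> sqrt (nn L) * sqrt (nn e)"
      by (rule abs_le_sqrt[OF cauchy_schwarz_Re nn_ge0 nn_ge0])
    moreover have "\<bar>Re (g e)\<bar> \<le> sqrt C * sqrt (nn e)" by (rule g_abs)
    moreover have "s n = sqrt (nn e)" by (simp add: s_def e_def)
    ultimately have "F L \<le> F (u n) + D * s n"
      using nn_ge0[of e] by (simp add: D_def algebra_simps)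
    then show ?thesis using u[of n] by linarith
  qed
  have inv0: "(\<lambda>n. 1 / (real n + 1)) \<longlonglongrightarrow> 0"
    using LIMSEQ_inverse_real_of_nat by (simp add: inverse_eq_divide add.commute)
  have lim: "(\<lambda>n. m + 1 / (real n + 1) + D * s n) \<longlonglongrightarrow> m + 0 + D * 0"
    by (intro tendsto_intros s inv0)
  have FLm: "F L \<le> m"
    using LIMSEQ_le_const[OF lim, of "F L"] FL_le by auto
  have re_eq: "Re (cinner L d) = Re (g d)" for d
  proof -
    have "\<forall>t. 0 \<le> 0 + 2 * t * (Re (cinner L d) - Re (g d)) + t^2 * nn d"
    proof
      fix t
      have "F L \<le> F (L + scaleC (complex_of_real t) d)" using FLm m_le by (meson order_trans)
      then show "0 \<le> 0 + 2 * t * (Re (cinner L d) - Re (g d)) + t^2 * nn d"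
        using nn_expand[of L t d] by (simp add: F_def g_add g_scale algebra_simps)
    qed
    from disc_lemma[OF this] nn_ge0[of d] have "(Re (cinner L d) - Re (g d))^2 \<le> 0" by simp
    then show ?thesis by simp
  qed
  have "cinner L d = g d" for d
  proof (rule complex_eqI)
    show "Re (cinner L d) = Re (g d)" by (rule re_eq)
    have "Re (cinner L (scaleC \<i> d)) = Re (g (scaleC \<i> d))" by (rule re_eq)
    then show "Im (cinner L d) = Im (g d)" by (simp add: cinner_scaleC_right g_scale)
  qed
  then have "\<forall>u. cinner v (T u) = cinner L u" by (simp add: g_def)
  then show ?thesis by blast
qed




lemma adj_exists:
  assumes "bounded_op (T::'a::chilbert \<Rightarrow> 'a)"
  shows "\<exists>S. \<forall>x y. cinner (T x) y = cinner x (S y)"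
proof -
  define S where "S y = (SOME w. \<forall>u. cinner y (T u) = cinner w u)" for y
  have S: "cinner y (T u) = cinner (S y) u" for y u
  proof -
    have "\<exists>w. \<forall>u. cinner y (T u) = cinner w u" by (rule riesz[OF assms])
    then have "\<forall>u. cinner y (T u) = cinner (S y) u" unfolding S_def by (rule someI_ex)
    then show ?thesis by blast
  qed
  have "cinner (T x) y = cinner x (S y)" for x y
    by (metis S cinner_commute)
  then show ?thesis by blast
qed

lemma adj_unique:
  assumes "\<forall>x y. cinner (T x) y = cinner x (S y)"
  shows "adj T = (S :: 'a::chilbert \<Rightarrow> 'a)"
  unfolding adj_def
proof (rule the_equality)
  show "\<forall>x y. cinner (T x) y = cinner x (S y)" by fact
  fix S' assume h: "\<forall>x y. cinner (T x) y = cinner x (S' y)"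
  show "S' = S"
  proof
    fix y show "S' y = S y" using h assms by (metis cinner_ext)
  qed
qed

lemma adj_prop:
  assumes "bounded_op (T::'a::chilbert \<Rightarrow> 'a)"
  shows "cinner (T x) y = cinner x (adj T y)"
proof -
  obtain S where S: "\<forall>x y. cinner (T x) y = cinner x (S y)" using adj_exists[OF assms] by blast
  then show ?thesis using adj_unique[OF S] by simp
qed

lemma adj_prop2:
  assumes "bounded_op (T::'a::chilbert \<Rightarrow> 'a)"
  shows "cinner x (T y) = cinner (adj T x) y"
  by (metis adj_prop[OF assms] cinner_commute)

lemma adj_adj:
  assumes "bounded_op (T::'a::chilbert \<Rightarrow> 'a)"
  shows "adj (adj T) = T"
  by (rule adj_unique) (metis adj_prop2[OF assms])

definition mat2 :: "('a \<Rightarrow> 'a) \<Rightarrow> ('a \<Rightarrow> 'a) \<Rightarrow> ('a \<Rightarrow> 'a) \<Rightarrow> ('a \<Rightarrow> 'a) \<Rightarrow> nat \<Rightarrow> nat \<Rightarrow> ('a \<Rightarrow> 'a)" where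
  "mat2 a b c d = (\<lambda>i j. if i = 0 then (if j = 0 then a else b) else (if j = 0 then c else d))"

definition qf2 :: "('a::chilbert \<Rightarrow> 'a) \<Rightarrow> ('a \<Rightarrow> 'a) \<Rightarrow> ('a \<Rightarrow> 'a) \<Rightarrow> ('a \<Rightarrow> 'a) \<Rightarrow> 'a \<Rightarrow> 'a \<Rightarrow> complex" where
  "qf2 a b c d h0 h1 = cinner h0 (a h0) + cinner h0 (b h1) + cinner h1 (c h0) + cinner h1 (d h1)"

lemma mat_pos_2:
  "mat_pos 2 (mat2 a b c d) \<longleftrightarrow> (\<forall>h0 h1. Im (qf2 a b c d h0 h1) = 0 \<and> 0 \<le> Re (qf2 a b c d h0 h1))"
proof -
  have e: "(\<Sum>i<2. \<Sum>j<2. cinner (h i) (mat2 a b c d i j (h j))) = qf2 a b c d (h 0) (h 1)" for h :: "nat \<Rightarrow> _"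
    by (simp add: numeral_2_eq_2 mat2_def qf2_def)
  show ?thesis
  proof
    assume "mat_pos 2 (mat2 a b c d)"
    then have H0: "\<forall>h::nat\<Rightarrow>_. Im (qf2 a b c d (h 0) (h 1)) = 0 \<and> 0 \<le> Re (qf2 a b c d (h 0) (h 1))"
      unfolding mat_pos_def e .
    have H: "Im (qf2 a b c d (h 0) (h 1)) = 0 \<and> 0 \<le> Re (qf2 a b c d (h 0) (h 1))" for h :: "nat \<Rightarrow> _"
      using H0 by (rule spec)
    show "\<forall>h0 h1. Im (qf2 a b c d h0 h1) = 0 \<and> 0 \<le> Re (qf2 a b c d h0 h1)"
    proof (intro allI)
      fix h0 h1
      show "Im (qf2 a b c d h0 h1) = 0 \<and> 0 \<le> Re (qf2 a b c d h0 h1)"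
        using H[of "\<lambda>i. if i = 0 then h0 else h1"] by simp
    qed
  next
    assume "\<forall>h0 h1. Im (qf2 a b c d h0 h1) = 0 \<and> 0 \<le> Re (qf2 a b c d h0 h1)"
    then show "mat_pos 2 (mat2 a b c d)" unfolding mat_pos_def e by blast
  qed
qed

lemma cp2:
  assumes "completely_positive_on M f" "a \<in> M" "b \<in> M" "c \<in> M" "d \<in> M"
    and "mat_pos 2 (mat2 a b c d)"
  shows "mat_pos 2 (mat2 (f a) (f b) (f c) (f d))"
proof -
  have "\<forall>i<2. \<forall>j<2. mat2 a b c d i j \<in> M" using assms by (simp add: mat2_def)
  then have "mat_pos 2 (\<lambda>i j. f (mat2 a b c d i j))"
    using assms(1,6) unfolding completely_positive_on_def by blast
  moreover have "(\<lambda>i j. f (mat2 a b c d i j)) = mat2 (f a) (f b) (f c) (f d)"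
    by (simp add: mat2_def fun_eq_iff)
  ultimately show ?thesis by simp
qed

lemma mat_pos_1: "mat_pos (Suc 0) (\<lambda>i j. D) \<longleftrightarrow> op_pos D"
proof -
  have "mat_pos (Suc 0) (\<lambda>i j. D) \<longleftrightarrow> (\<forall>h::nat\<Rightarrow>_. Im (cinner (h 0) (D (h 0))) = 0 \<and> 0 \<le> Re (cinner (h 0) (D (h 0))))"
    by (simp add: mat_pos_def)
  also have "\<dots> \<longleftrightarrow> op_pos D"
  proof
    assume a: "\<forall>h::nat\<Rightarrow>_. Im (cinner (h 0) (D (h 0))) = 0 \<and> 0 \<le> Re (cinner (h 0) (D (h 0)))"
    show "op_pos D" unfolding op_pos_def
    proof
      fix x show "Im (cinner x (D x)) = 0 \<and> 0 \<le> Re (cinner x (D x))" using spec[OF a, of "\<lambda>_. x"] by simp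
    qed
  next
    assume "op_pos D" then show "\<forall>h::nat\<Rightarrow>_. Im (cinner (h 0) (D (h 0))) = 0 \<and> 0 \<le> Re (cinner (h 0) (D (h 0)))"
      unfolding op_pos_def by blast
  qed
  finally show ?thesis .
qed




lemma vn_bounded: "von_neumann_algebra M \<Longrightarrow> x \<in> M \<Longrightarrow> bounded_op x"
  unfolding von_neumann_algebra_def by blast
lemma vn_comp: "von_neumann_algebra M \<Longrightarrow> x \<in> M \<Longrightarrow> y \<in> M \<Longrightarrow> x \<circ> y \<in> M"
  unfolding von_neumann_algebra_def by blast
lemma vn_add: "von_neumann_algebra M \<Longrightarrow> x \<in> M \<Longrightarrow> y \<in> M \<Longrightarrow> op_add x y \<in> M"
  unfolding von_neumann_algebra_def by blast
lemma vn_scale: "von_neumann_algebra M \<Longrightarrow> x \<in> M \<Longrightarrow> op_scale c x \<in> M"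
  unfolding von_neumann_algebra_def by blast
lemma vn_adj: "von_neumann_algebra M \<Longrightarrow> x \<in> M \<Longrightarrow> adj x \<in> M"
  unfolding von_neumann_algebra_def by blast
lemma vn_id: "von_neumann_algebra M \<Longrightarrow> id \<in> M"
  unfolding von_neumann_algebra_def by blast

lemma op_diff_eq: "op_diff x y = op_add x (op_scale (-1) (y::'a::chilbert \<Rightarrow> 'a))"
  by (simp add: op_diff_def op_add_def op_scale_def scaleC_minus_one fun_eq_iff)

lemma vn_diff: "von_neumann_algebra M \<Longrightarrow> x \<in> M \<Longrightarrow> y \<in> M \<Longrightarrow> op_diff x y \<in> M"
  unfolding op_diff_eq by (intro vn_add vn_scale)

lemma ucp_in: "ucp_on M f \<Longrightarrow> x \<in> M \<Longrightarrow> f x \<in> M" unfolding ucp_on_def by blast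
lemma ucp_add: "ucp_on M f \<Longrightarrow> x \<in> M \<Longrightarrow> y \<in> M \<Longrightarrow> f (op_add x y) = op_add (f x) (f y)"
  unfolding ucp_on_def linear_on_def by blast
lemma ucp_scale: "ucp_on M f \<Longrightarrow> x \<in> M \<Longrightarrow> f (op_scale c x) = op_scale c (f x)"
  unfolding ucp_on_def linear_on_def by blast
lemma ucp_id: "ucp_on M f \<Longrightarrow> f id = id" unfolding ucp_on_def by blast
lemma ucp_cp: "ucp_on M f \<Longrightarrow> completely_positive_on M f" unfolding ucp_on_def by blast

lemma ucp_diff: "von_neumann_algebra M \<Longrightarrow> ucp_on M f \<Longrightarrow> x \<in> M \<Longrightarrow> y \<in> M \<Longrightarrow>
   f (op_diff x y) = op_diff (f x) (f y)"
  unfolding op_diff_eq by (simp add: ucp_add ucp_scale vn_scale)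

lemma ucp_mono:
  assumes vn: "von_neumann_algebra M" and f: "ucp_on M f" and A: "A \<in> M" and B: "B \<in> M"
    and le: "op_le A B"
  shows "op_le (f A) (f B)"
proof -
  have D: "op_diff B A \<in> M" by (rule vn_diff[OF vn B A])
  have m1: "mat_pos (Suc 0) (\<lambda>i j. op_diff B A)" using le by (simp add: mat_pos_1 op_le_def)
  have m2: "\<forall>i<Suc 0. \<forall>j<Suc 0. (\<lambda>i j. op_diff B A) i j \<in> M" using D by simp
  have cp: "\<forall>n X. (\<forall>i<n. \<forall>j<n. X i j \<in> M) \<and> mat_pos n X \<longrightarrow> mat_pos n (\<lambda>i j. f (X i j))"
    using ucp_cp[OF f] unfolding completely_positive_on_def .
  have "mat_pos (Suc 0) (\<lambda>i j. f ((\<lambda>i j. op_diff B A) i j))"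
    by (rule mp[OF spec[OF spec[OF cp, of "Suc 0"], of "\<lambda>i j. op_diff B A"] conjI[OF m2 m1]])
  then have "mat_pos (Suc 0) (\<lambda>i j. f (op_diff B A))" by simp
  then show ?thesis by (simp add: mat_pos_1 op_le_def ucp_diff[OF vn f B A])
qed

lemma op_le_antisym:
  assumes bA: "bounded_op (A::'a::chilbert \<Rightarrow> 'a)" and bB: "bounded_op B"
    and l1: "op_le A B" and l2: "op_le B A"
  shows "A = B"
proof -
  define D where "D x = B x - A x" for x
  have Dadd: "D (x + y) = D x + D y" for x y
    by (simp add: D_def bounded_add[OF bA] bounded_add[OF bB] algebra_simps)
  have Dsc: "D (scaleC c x) = scaleC c (D x)" for c x
    by (simp add: D_def bounded_scale[OF bA] bounded_scale[OF bB] scaleC_diff_right)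
  have q0: "cinner h (D h) = 0" for h
  proof -
    have p1: "Im (cinner h (D h)) = 0" "0 \<le> Re (cinner h (D h))"
      using l1 unfolding op_le_def op_pos_def op_diff_def D_def by auto
    have "cinner h (A h - B h) = - cinner h (D h)"
      by (simp add: D_def cinner_diff_right)
    then have "0 \<le> - Re (cinner h (D h))"
      using l2 unfolding op_le_def op_pos_def op_diff_def by (metis uminus_complex.sel(1))
    then show ?thesis using p1 by (simp add: complex_eq_iff)
  qed
  have pol: "cinner h (D k) + cinner k (D h) = 0" for h k
    using q0[of "h + k"] q0[of h] q0[of k]
    by (simp add: Dadd cinner_add_left cinner_add_right add_ac)
  have "cinner h (D k) = 0" for h k
  proof -
    have "cinner h (D (scaleC \<i> k)) + cinner (scaleC \<i> k) (D h) = 0" by (rule pol)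
    then have "\<i> * cinner h (D k) - \<i> * cinner k (D h) = 0"
      by (simp add: Dsc cinner_scaleC_right cinner_scaleC_left)
    then have "cinner h (D k) = cinner k (D h)" by (simp add: right_diff_distrib[symmetric])
    then show ?thesis using pol[of h k] by simp
  qed
  then have "D k = 0" for k by (metis cinner_ext cinner_zero_right)
  then show ?thesis by (simp add: D_def fun_eq_iff)
qed




lemma real_bound_aux:
  fixes r n0 n1 K :: real
  assumes "r^2 \<le> n0 * (K * n1)" "0 \<le> n0" "0 \<le> n1" "0 \<le> K"
  shows "0 \<le> (K + 1) * n0 + (K + 1) * n1 + 2 * r"
proof -
  have "(2 * r)^2 \<le> 4 * K * (n0 * n1)" using assms(1) by (simp add: power_mult_distrib mult_ac)
  also have "\<dots> \<le> K * (n0 + n1)^2"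
  proof -
    have e: "(n0 + n1)^2 - 4*(n0*n1) = (n0 - n1)^2" by (simp add: power2_eq_square algebra_simps)
    have "0 \<le> (n0 + n1)^2 - 4*(n0*n1)" unfolding e by simp
    then have "4 * (n0 * n1) \<le> (n0 + n1)^2" by simp
    from mult_left_mono[OF this assms(4)] show ?thesis by (simp add: mult_ac)
  qed
  also have "\<dots> \<le> ((K + 1) * (n0 + n1))^2"
  proof -
    have e: "(K+1)^2 = K*K + 2*K + 1" by (simp add: power2_eq_square algebra_simps)
    have "0 \<le> K*K" by simp
    then have "K \<le> (K+1)^2" using e assms(4) by simp
    then have "K * (n0 + n1)^2 \<le> (K+1)^2 * (n0 + n1)^2" by (simp add: mult_right_mono)
    then show ?thesis by (simp add: power_mult_distrib)
  qed
  finally have a: "\<bar>2 * r\<bar> \<le> \<bar>(K + 1) * (n0 + n1)\<bar>" using abs_le_square_iff by blast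
  have "0 \<le> (K + 1) * (n0 + n1)" using assms by simp
  then have "- (2 * r) \<le> (K + 1) * (n0 + n1)" using a by simp
  then show ?thesis by (simp add: distrib_left)
qed

lemma ucp_herm:
  fixes M :: "('a::chilbert \<Rightarrow> 'a) set"
  assumes vn: "von_neumann_algebra M" and f: "ucp_on M f" and xM: "x \<in> M"
  shows "adj (f x) = f (adj x)"
proof -
  have bx: "bounded_op x" by (rule vn_bounded[OF vn xM])
  obtain K where K0: "0 \<le> K" and K: "\<And>h. nn (x h) \<le> K * nn h" using bounded_nn[OF bx] by blast
  define c where "c = K + 1"
  define C :: "'a \<Rightarrow> 'a" where "C = op_scale (complex_of_real c) id"
  have CM: "C \<in> M" unfolding C_def by (rule vn_scale[OF vn vn_id[OF vn]])
  have axM: "adj x \<in> M" by (rule vn_adj[OF vn xM])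
  have fC: "f C = C" unfolding C_def by (simp add: ucp_scale[OF f vn_id[OF vn]] ucp_id[OF f])
  have Ch: "cinner h (C h) = complex_of_real (c * nn h)" for h
    by (simp add: C_def op_scale_def cinner_scaleC_right cinner_self_nn)
  have pos: "mat_pos 2 (mat2 C x (adj x) C)"
    unfolding mat_pos_2
  proof (intro allI)
    fix h0 h1
    have e1: "cinner h1 (adj x h0) = cnj (cinner h0 (x h1))"
      by (metis adj_prop[OF bx] cinner_commute)
    have q: "qf2 C x (adj x) C h0 h1 = complex_of_real (c * nn h0 + c * nn h1) + (cinner h0 (x h1) + cnj (cinner h0 (x h1)))"
      by (simp add: qf2_def Ch e1)
    have "(Re (cinner h0 (x h1)))^2 \<le> nn h0 * nn (x h1)" by (rule cauchy_schwarz_Re)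
    also have "\<dots> \<le> nn h0 * (K * nn h1)" by (rule mult_left_mono[OF K nn_ge0])
    finally have "0 \<le> c * nn h0 + c * nn h1 + 2 * Re (cinner h0 (x h1))"
      unfolding c_def using real_bound_aux nn_ge0 K0 by blast
    then show "Im (qf2 C x (adj x) C h0 h1) = 0 \<and> 0 \<le> Re (qf2 C x (adj x) C h0 h1)"
      unfolding q by simp
  qed
  have pos2: "mat_pos 2 (mat2 C (f x) (f (adj x)) C)"
    using cp2[OF ucp_cp[OF f] CM xM axM CM pos] fC by simp
  have fxM: "f x \<in> M" by (rule ucp_in[OF f xM])
  have bfx: "bounded_op (f x)" by (rule vn_bounded[OF vn fxM])
  have key: "cinner h0 (f x h1) = cnj (cinner h1 (f (adj x) h0))" for h0 h1
  proof -
    have I: "Im (qf2 C (f x) (f (adj x)) C a b) = 0" for a b using pos2 unfolding mat_pos_2 by blast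
    have i1: "Im (cinner h0 (f x h1)) + Im (cinner h1 (f (adj x) h0)) = 0"
      using I[of h0 h1] by (simp add: qf2_def Ch)
    have i2: "Re (cinner h0 (f x h1)) - Re (cinner h1 (f (adj x) h0)) = 0"
      using I[of h0 "scaleC \<i> h1"]
      by (simp add: qf2_def Ch bounded_scale[OF bfx] cinner_scaleC_right cinner_scaleC_left)
    show ?thesis using i1 i2 by (simp add: complex_eq_iff)
  qed
  show ?thesis
  proof (rule adj_unique, intro allI)
    fix u v
    show "cinner (f x u) v = cinner u (f (adj x) v)"
      using key[of v u] cinner_commute[of "f x u" v] by simp
  qed
qed

lemma ucp_KS:
  fixes M :: "('a::chilbert \<Rightarrow> 'a) set"
  assumes vn: "von_neumann_algebra M" and f: "ucp_on M f" and xM: "x \<in> M"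
  shows "op_le (adj (f x) \<circ> f x) (f (adj x \<circ> x))"
proof -
  have bx: "bounded_op x" by (rule vn_bounded[OF vn xM])
  have axM: "adj x \<in> M" by (rule vn_adj[OF vn xM])
  have xxM: "adj x \<circ> x \<in> M" by (rule vn_comp[OF vn axM xM])
  have idM: "id \<in> M" by (rule vn_id[OF vn])
  have pos: "mat_pos 2 (mat2 (adj x \<circ> x) (adj x) x id)"
    unfolding mat_pos_2
  proof (intro allI)
    fix h0 h1
    have "qf2 (adj x \<circ> x) (adj x) x id h0 h1 = cinner (x h0 + h1) (x h0 + h1)"
      by (simp add: qf2_def adj_prop[OF bx, symmetric] cinner_add_left cinner_add_right add_ac)
    then show "Im (qf2 (adj x \<circ> x) (adj x) x id h0 h1) = 0 \<and> 0 \<le> Re (qf2 (adj x \<circ> x) (adj x) x id h0 h1)"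
      by (simp add: cinner_ge_zero)
  qed
  have pos2: "mat_pos 2 (mat2 (f (adj x \<circ> x)) (f (adj x)) (f x) id)"
    using cp2[OF ucp_cp[OF f] xxM axM xM idM pos] ucp_id[OF f] by simp
  have fxM: "f x \<in> M" by (rule ucp_in[OF f xM])
  have bfx: "bounded_op (f x)" by (rule vn_bounded[OF vn fxM])
  have herm: "f (adj x) = adj (f x)" using ucp_herm[OF vn f xM] by simp
  show ?thesis unfolding op_le_def op_pos_def
  proof
    fix u
    have Q: "Im (qf2 (f (adj x \<circ> x)) (f (adj x)) (f x) id u (- f x u)) = 0 \<and>
             0 \<le> Re (qf2 (f (adj x \<circ> x)) (f (adj x)) (f x) id u (- f x u))"
      using pos2 unfolding mat_pos_2 by blast
    have "qf2 (f (adj x \<circ> x)) (f (adj x)) (f x) id u (- f x u) = cinner u (op_diff (f (adj x \<circ> x)) (adj (f x) \<circ> f x) u)"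
      by (simp add: qf2_def herm op_diff_def cinner_diff_right adj_prop[OF bfx, symmetric]
          cinner_minus_left cinner_minus_right)
    then show "Im (cinner u (op_diff (f (adj x \<circ> x)) (adj (f x) \<circ> f x) u)) = 0 \<and>
               0 \<le> Re (cinner u (op_diff (f (adj x \<circ> x)) (adj (f x) \<circ> f x) u))"
      using Q by simp
  qed
qed




lemma ucp_KS2:
  fixes M :: "('a::chilbert \<Rightarrow> 'a) set"
  assumes vn: "von_neumann_algebra M" and f: "ucp_on M f" and xM: "x \<in> M"
  shows "op_le (f x \<circ> adj (f x)) (f (x \<circ> adj x))"
proof -
  have axM: "adj x \<in> M" by (rule vn_adj[OF vn xM])
  have "op_le (adj (f (adj x)) \<circ> f (adj x)) (f (adj (adj x) \<circ> adj x))" by (rule ucp_KS[OF vn f axM])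
  moreover have "f (adj x) = adj (f x)" using ucp_herm[OF vn f xM] by simp
  moreover have "adj (adj (f x)) = f x" by (rule adj_adj[OF vn_bounded[OF vn ucp_in[OF f xM]]])
  moreover have "adj (adj x) = x" by (rule adj_adj[OF vn_bounded[OF vn xM]])
  ultimately show ?thesis by simp
qed

theorem claim2:
  fixes M :: "('a::chilbert \<Rightarrow> 'a) set"
    and \<phi> \<psi> :: "('a \<Rightarrow> 'a) \<Rightarrow> ('a \<Rightarrow> 'a)"
  assumes "von_neumann_algebra M"
    and "ucp_on M \<phi>" and "normal_on M \<phi>"
    and "ucp_on M \<psi>"
    and "\<forall>x\<in>M. \<psi> (\<psi> x) = \<psi> x"
    and "\<psi> ` M = fixed_points M \<phi>"
    and "\<forall>x\<in>M. \<phi> (\<psi> x) = \<psi> x \<and> \<psi> (\<phi> x) = \<psi> x"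
    and "\<forall>x\<in>fixed_points M \<phi>. \<psi> x = x"
  shows "fixed_points M \<phi> \<subseteq> mult_dom M \<psi> \<and> \<phi> ` mult_dom M \<psi> \<subseteq> mult_dom M \<psi>"
proof
  note vn = assms(1) and phi = assms(2) and psi = assms(4) and idem = assms(5)
    and comm = assms(7) and fixid = assms(8)
  show "fixed_points M \<phi> \<subseteq> mult_dom M \<psi>"
  proof
    fix x assume x: "x \<in> fixed_points M \<phi>"
    then have "x \<in> M" "\<psi> x = x" using fixid by (auto simp: fixed_points_def)
    then show "x \<in> mult_dom M \<psi>" by (simp add: mult_dom_def ce_prod_def)
  qed
  show "\<phi> ` mult_dom M \<psi> \<subseteq> mult_dom M \<psi>"
  proof
    fix w assume "w \<in> \<phi> ` mult_dom M \<psi>"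
    then obtain y where y: "y \<in> mult_dom M \<psi>" and w: "w = \<phi> y" by blast
    have yM: "y \<in> M" and hy1: "\<psi> (adj y \<circ> y) = \<psi> (adj (\<psi> y) \<circ> \<psi> y)"
      and hy2: "\<psi> (y \<circ> adj y) = \<psi> (\<psi> y \<circ> adj (\<psi> y))"
      using y by (auto simp: mult_dom_def ce_prod_def)
    define z where "z = \<phi> y"
    have zM: "z \<in> M" unfolding z_def by (rule ucp_in[OF phi yM])
    have pz: "\<psi> z = \<psi> y" using comm yM by (simp add: z_def)
    have pyM: "\<psi> y \<in> M" by (rule ucp_in[OF psi yM])
    have ayM: "adj y \<in> M" by (rule vn_adj[OF vn yM])
    have azM: "adj z \<in> M" by (rule vn_adj[OF vn zM])
    have apyM: "adj (\<psi> y) \<in> M" by (rule vn_adj[OF vn pyM])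
    have bnd: "\<And>a. a \<in> M \<Longrightarrow> bounded_op (\<psi> a)" using vn_bounded[OF vn ucp_in[OF psi]] by blast
    have m1: "adj y \<circ> y \<in> M" "adj z \<circ> z \<in> M" "adj (\<psi> y) \<circ> \<psi> y \<in> M"
      using vn_comp[OF vn] ayM yM azM zM apyM pyM by auto
    have a1: "op_le (\<psi> (adj z \<circ> z)) (\<psi> (adj y \<circ> y))"
    proof -
      have "op_le (adj z \<circ> z) (\<phi> (adj y \<circ> y))" unfolding z_def by (rule ucp_KS[OF vn phi yM])
      from ucp_mono[OF vn psi m1(2) ucp_in[OF phi m1(1)] this]
      show ?thesis using comm m1(1) by simp
    qed
    have b1: "op_le (\<psi> (adj y \<circ> y)) (\<psi> (adj z \<circ> z))"
    proof -
      have "op_le (adj (\<psi> z) \<circ> \<psi> z) (\<psi> (adj z \<circ> z))" by (rule ucp_KS[OF vn psi zM])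
      then have "op_le (adj (\<psi> y) \<circ> \<psi> y) (\<psi> (adj z \<circ> z))" by (simp add: pz)
      from ucp_mono[OF vn psi m1(3) ucp_in[OF psi m1(2)] this]
      show ?thesis using idem m1(2) hy1 by simp
    qed
    have e1: "\<psi> (adj z \<circ> z) = \<psi> (adj y \<circ> y)"
      by (rule op_le_antisym[OF bnd[OF m1(2)] bnd[OF m1(1)] a1 b1])
    have m2: "y \<circ> adj y \<in> M" "z \<circ> adj z \<in> M" "\<psi> y \<circ> adj (\<psi> y) \<in> M"
      using vn_comp[OF vn] ayM yM azM zM apyM pyM by auto
    have a2: "op_le (\<psi> (z \<circ> adj z)) (\<psi> (y \<circ> adj y))"
    proof -
      have "op_le (z \<circ> adj z) (\<phi> (y \<circ> adj y))" unfolding z_def by (rule ucp_KS2[OF vn phi yM])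
      from ucp_mono[OF vn psi m2(2) ucp_in[OF phi m2(1)] this]
      show ?thesis using comm m2(1) by simp
    qed
    have b2: "op_le (\<psi> (y \<circ> adj y)) (\<psi> (z \<circ> adj z))"
    proof -
      have "op_le (\<psi> z \<circ> adj (\<psi> z)) (\<psi> (z \<circ> adj z))" by (rule ucp_KS2[OF vn psi zM])
      then have "op_le (\<psi> y \<circ> adj (\<psi> y)) (\<psi> (z \<circ> adj z))" by (simp add: pz)
      from ucp_mono[OF vn psi m2(3) ucp_in[OF psi m2(2)] this]
      show ?thesis using idem m2(2) hy2 by simp
    qed
    have e2: "\<psi> (z \<circ> adj z) = \<psi> (y \<circ> adj y)"
      by (rule op_le_antisym[OF bnd[OF m2(2)] bnd[OF m2(1)] a2 b2])
    have "z \<in> mult_dom M \<psi>"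
      unfolding mult_dom_def ce_prod_def using zM e1 e2 hy1 hy2 pz by simp
    then show "w \<in> mult_dom M \<psi>" by (simp add: w z_def)
  qed
qed


end
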